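(* For every $g\in G(\Gamma)$ and every $d\ge1$, the $d$-tail of $g$ contains at most $d\kappa$ syllables, where $\kappa$ is the maximal number of pairwise adjacent vertices of $\Gamma$.
   Context: $G(\Gamma)$ is the graph product of groups $\{G_v\}_{v\in\Gamma}$ over a finite simplicial graph $\Gamma$. Reduced words are words $(g_1,\dots,g_n)$, $g_i\in G_{v_i}$, that cannot be shortened by swapping consecutive syllables from adjacent vertex groups, merging consecutive syllables from the same vertex group, or deleting identity syllables; reduced words for the same element differ by such swaps. The $d$-tail of $g$ is the set of syllables of $g$ which occur among the last $d$ syllables of some reduced word representing $g$. *)

theory Defs
  imports "HOL-Algebra.Group"
begin

text \<open>The graph Gamma has vertex set V (finite) and a
symmetric irreflexive adjacency relation E.  Each vertex v carries a group G v
(all vertex groups live in a common element type).  A syllable is a pair (v, a)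
with a in the carrier of G v; a word is a list of syllables.\<close>

definition wf_word :: "'v set \<Rightarrow> ('v \<Rightarrow> 'g monoid) \<Rightarrow> ('v \<times> 'g) list \<Rightarrow> bool" where
  "wf_word V G w \<longleftrightarrow> (\<forall>(v,a)\<in>set w. v \<in> V \<and> a \<in> carrier (G v))"

definition swap_move :: "'v set \<Rightarrow> ('v \<Rightarrow> 'v \<Rightarrow> bool) \<Rightarrow> ('v \<Rightarrow> 'g monoid)
    \<Rightarrow> (('v \<times> 'g) list \<times> ('v \<times> 'g) list) set" where
  "swap_move V E G = {(xs @ [(u,a),(v,b)] @ ys, xs @ [(v,b),(u,a)] @ ys) | xs u a v b ys.
      wf_word V G (xs @ [(u,a),(v,b)] @ ys) \<and> E u v}"

definition merge_move :: "'v set \<Rightarrow> ('v \<Rightarrow> 'g monoid)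
    \<Rightarrow> (('v \<times> 'g) list \<times> ('v \<times> 'g) list) set" where
  "merge_move V G = {(xs @ [(v,a),(v,b)] @ ys, xs @ [(v, a \<otimes>\<^bsub>G v\<^esub> b)] @ ys) | xs v a b ys.
      wf_word V G (xs @ [(v,a),(v,b)] @ ys)}"

definition delete_move :: "'v set \<Rightarrow> ('v \<Rightarrow> 'g monoid)
    \<Rightarrow> (('v \<times> 'g) list \<times> ('v \<times> 'g) list) set" where
  "delete_move V G = {(xs @ [(v, \<one>\<^bsub>G v\<^esub>)] @ ys, xs @ ys) | xs v ys.
      wf_word V G (xs @ [(v, \<one>\<^bsub>G v\<^esub>)] @ ys)}"

definition gp_move where
  "gp_move V E G = swap_move V E G \<union> merge_move V G \<union> delete_move V G"

text \<open>Two words represent the same element of the graph product iff they are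
related by the equivalence relation generated by the moves.\<close>
definition gp_equiv :: "'v set \<Rightarrow> ('v \<Rightarrow> 'v \<Rightarrow> bool) \<Rightarrow> ('v \<Rightarrow> 'g monoid)
    \<Rightarrow> (('v \<times> 'g) list \<times> ('v \<times> 'g) list) set" where
  "gp_equiv V E G = {(w, w'). wf_word V G w \<and> wf_word V G w' \<and>
      (w, w') \<in> (gp_move V E G \<union> (gp_move V E G)\<inverse>)\<^sup>*}"

definition gp_elems :: "'v set \<Rightarrow> ('v \<Rightarrow> 'v \<Rightarrow> bool) \<Rightarrow> ('v \<Rightarrow> 'g monoid)
    \<Rightarrow> ('v \<times> 'g) list set set" where
  "gp_elems V E G = {w. wf_word V G w} // gp_equiv V E G"

definition reduced_word :: "'v set \<Rightarrow> ('v \<Rightarrow> 'v \<Rightarrow> bool) \<Rightarrow> ('v \<Rightarrow> 'g monoid)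
    \<Rightarrow> ('v \<times> 'g) list \<Rightarrow> bool" where
  "reduced_word V E G w \<longleftrightarrow> wf_word V G w \<and>
     (\<forall>w'. (w, w') \<in> (swap_move V E G)\<^sup>* \<longrightarrow>
        (\<forall>(v,a)\<in>set w'. a \<noteq> \<one>\<^bsub>G v\<^esub>) \<and>
        (\<forall>xs u a v b ys. w' = xs @ [(u,a),(v,b)] @ ys \<longrightarrow> u \<noteq> v))"

definition d_tail :: "'v set \<Rightarrow> ('v \<Rightarrow> 'v \<Rightarrow> bool) \<Rightarrow> ('v \<Rightarrow> 'g monoid)
    \<Rightarrow> ('v \<times> 'g) list set \<Rightarrow> nat \<Rightarrow> ('v \<times> 'g) set" where
  "d_tail V E G g d = {s. \<exists>w. w \<in> g \<and> reduced_word V E G w \<and>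
       s \<in> set (drop (length w - d) w)}"

definition clique_number :: "'v set \<Rightarrow> ('v \<Rightarrow> 'v \<Rightarrow> bool) \<Rightarrow> nat" where
  "clique_number V E = Max {card C | C. C \<subseteq> V \<and> (\<forall>x\<in>C. \<forall>y\<in>C. x \<noteq> y \<longrightarrow> E x y)}"

end

theory Submission
  imports Defs
begin


locale gp =
  fixes V :: "'v set" and E :: "'v \<Rightarrow> 'v \<Rightarrow> bool" and G :: "'v \<Rightarrow> 'g monoid"
  assumes Esym: "E u v \<Longrightarrow> E v u" and Eirr: "\<not> E v v"
    and grp: "v \<in> V \<Longrightarrow> group (G v)"
begin

abbreviation sw where "sw \<equiv> (swap_move V E G)\<^sup>*"
abbreviation wf where "wf \<equiv> wf_word V G"

lemma wf_append[simp]: "wf (xs @ ys) = (wf xs \<and> wf ys)"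
  unfolding wf_word_def by auto
lemma wf_Cons[simp]: "wf ((v,a) # ys) = (v \<in> V \<and> a \<in> carrier (G v) \<and> wf ys)"
  unfolding wf_word_def by auto
lemma wf_Nil[simp]: "wf []" unfolding wf_word_def by auto
lemma wf_subset: "wf w \<Longrightarrow> set w' \<subseteq> set w \<Longrightarrow> wf w'"
  unfolding wf_word_def by auto
lemma wf_rev[simp]: "wf (rev w) = wf w" unfolding wf_word_def by auto

lemma swap_step_E:
  "(w, w') \<in> swap_move V E G \<longleftrightarrow> (\<exists>xs u a v b ys. w = xs @ [(u,a),(v,b)] @ ys \<and>
     w' = xs @ [(v,b),(u,a)] @ ys \<and> wf w \<and> E u v)"
  unfolding swap_move_def by blast

lemma swap_intro: "wf (xs @ [(u,a),(v,b)] @ ys) \<Longrightarrow> E u v \<Longrightarrow>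
   (xs @ [(u,a),(v,b)] @ ys, xs @ [(v,b),(u,a)] @ ys) \<in> swap_move V E G"
  unfolding swap_move_def by blast

lemma swap_sym: "(w, w') \<in> swap_move V E G \<Longrightarrow> (w', w) \<in> swap_move V E G"
  unfolding swap_step_E
  apply clarify
  subgoal for xs u a v b ys
    apply (rule exI[of _ xs], rule exI[of _ v], rule exI[of _ b], rule exI[of _ u], rule exI[of _ a], rule exI[of _ ys])
    by (auto simp: Esym wf_word_def)
  done

lemma swap_set: "(w, w') \<in> swap_move V E G \<Longrightarrow> set w' = set w"
  unfolding swap_step_E by auto

lemma sw_set: "(w, w') \<in> sw \<Longrightarrow> set w' = set w"
  by (induction rule: rtrancl_induct) (auto dest: swap_set)

lemma sw_wf: "(w, w') \<in> sw \<Longrightarrow> wf w' = wf w"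
  using sw_set[of w w'] unfolding wf_word_def by simp

lemma sw_sym: "(w, w') \<in> sw \<Longrightarrow> (w', w) \<in> sw"
  by (induction rule: rtrancl_induct) (auto intro: converse_rtrancl_into_rtrancl swap_sym)

lemma sw_trans: "(a, b) \<in> sw \<Longrightarrow> (b, c) \<in> sw \<Longrightarrow> (a, c) \<in> sw"
  by (rule rtrancl_trans)

lemma sw_swap: "wf (xs @ [(u,a),(v,b)] @ ys) \<Longrightarrow> E u v \<Longrightarrow>
   (xs @ [(u,a),(v,b)] @ ys, xs @ [(v,b),(u,a)] @ ys) \<in> sw"
  using swap_intro by blast

lemma sw_inv:
  assumes "\<And>w w'. (w, w') \<in> swap_move V E G \<Longrightarrow> f w = f w'"
  shows "(w, w') \<in> sw \<Longrightarrow> f w = f w'"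
  by (induction rule: rtrancl_induct) (auto dest: assms)

lemma sw_map:
  assumes "\<And>w w'. (w, w') \<in> swap_move V E G \<Longrightarrow> (f w, f w') \<in> sw"
  shows "(w, w') \<in> sw \<Longrightarrow> (f w, f w') \<in> sw"
  by (induction rule: rtrancl_induct) (auto dest: assms intro: rtrancl_trans)

lemma sw_app_right: "(x, x') \<in> sw \<Longrightarrow> wf t \<Longrightarrow> (x @ t, x' @ t) \<in> sw"
proof (induction rule: rtrancl_induct)
  case (step y z)
  from step(2) obtain xs u a v b ys where "y = xs @ [(u,a),(v,b)] @ ys" "z = xs @ [(v,b),(u,a)] @ ys"
    "wf y" "E u v" unfolding swap_step_E by blast
  then have "(y @ t, z @ t) \<in> sw" using sw_swap[of xs u a v b "ys @ t"] step.prems by auto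
  then show ?case using step by (meson rtrancl_trans)
qed auto

lemma sw_app_left: "(x, x') \<in> sw \<Longrightarrow> wf t \<Longrightarrow> (t @ x, t @ x') \<in> sw"
proof (induction rule: rtrancl_induct)
  case (step y z)
  from step(2) obtain xs u a v b ys where "y = xs @ [(u,a),(v,b)] @ ys" "z = xs @ [(v,b),(u,a)] @ ys"
    "wf y" "E u v" unfolding swap_step_E by blast
  then have "(t @ y, t @ z) \<in> sw" using sw_swap[of "t @ xs" u a v b ys] step.prems by auto
  then show ?case using step by (meson rtrancl_trans)
qed auto

lemma filter_inv:
  assumes "\<And>u v. u \<in> S \<Longrightarrow> v \<in> S \<Longrightarrow> \<not> E u v" and "(w, w') \<in> sw"
  shows "filter (\<lambda>s. fst s \<in> S) w = filter (\<lambda>s. fst s \<in> S) w'"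
proof -
  have "filter (\<lambda>s. fst s \<in> S) x = filter (\<lambda>s. fst s \<in> S) y"
    if "(x, y) \<in> swap_move V E G" for x y
  proof -
    from that obtain xs u a v b ys where "x = xs @ [(u,a),(v,b)] @ ys" "y = xs @ [(v,b),(u,a)] @ ys"
      "E u v" unfolding swap_step_E by blast
    then show ?thesis using assms(1) by auto
  qed
  then show ?thesis using sw_inv[of "filter (\<lambda>s. fst s \<in> S)", OF _ assms(2)] by blast
qed

end


fun rm1 :: "'v \<Rightarrow> ('v \<times> 'g) list \<Rightarrow> ('v \<times> 'g) list" where
  "rm1 v [] = []"
| "rm1 v (s # r) = (if fst s = v then r else s # rm1 v r)"

definition rl :: "'v \<Rightarrow> ('v \<times> 'g) list \<Rightarrow> ('v \<times> 'g) list" where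
  "rl v w = rev (rm1 v (rev w))"

fun finr :: "('v \<Rightarrow> 'v \<Rightarrow> bool) \<Rightarrow> 'v \<Rightarrow> ('v \<times> 'g) list \<Rightarrow> bool" where
  "finr E v [] = False"
| "finr E v (s # r) = (fst s = v \<or> (E v (fst s) \<and> finr E v r))"

definition lv :: "'v \<Rightarrow> ('v \<times> 'g) list \<Rightarrow> 'g" where
  "lv v w = snd (last (filter (\<lambda>s. fst s \<in> {v}) w))"

lemma rm1_append: "rm1 v (p @ q) = (if \<exists>s\<in>set p. fst s = v then rm1 v p @ q else p @ rm1 v q)"
  by (induction p) auto

lemma rm1_set: "set (rm1 v r) \<subseteq> set r"
  by (induction r) auto

lemma rl_set: "set (rl v w) \<subseteq> set w"
  unfolding rl_def using rm1_set by fastforce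

lemma rl_snoc_same[simp]: "rl v (x @ [(v,c)]) = x"
  unfolding rl_def by simp

lemma rl_snoc_diff: "u \<noteq> v \<Longrightarrow> rl v (x @ [(u,c)]) = rl v x @ [(u,c)]"
  unfolding rl_def by simp

lemma lv_snoc_same[simp]: "lv v (x @ [(v,c)]) = c"
  unfolding lv_def by simp

lemma lv_snoc_diff: "u \<noteq> v \<Longrightarrow> lv v (x @ [(u,c)]) = lv v x"
  unfolding lv_def by simp

lemma finr_append: "finr E v (p @ q) = (finr E v p \<or> ((\<forall>s\<in>set p. E v (fst s)) \<and> finr E v q))"
  by (induction p) auto

context gp begin

definition fin where "fin v w = finr E v (rev w)"

lemma fin_snoc_same[simp]: "fin v (x @ [(v,c)])"
  unfolding fin_def by simp

lemma fin_snoc_diff: "u \<noteq> v \<Longrightarrow> fin v (x @ [(u,c)]) = (E v u \<and> fin v x)"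
  unfolding fin_def by simp

lemma rl_swap:
  assumes "(w, w') \<in> swap_move V E G"
  shows "(rl v w, rl v w') \<in> sw"
proof -
  from assms obtain xs u a u' b ys where w: "w = xs @ [(u,a),(u',b)] @ ys"
    and w': "w' = xs @ [(u',b),(u,a)] @ ys" and wfw: "wf w" and E: "E u u'"
    unfolding swap_step_E by blast
  have uu: "u \<noteq> u'" using E Eirr by auto
  show ?thesis
  proof (cases "\<exists>s\<in>set ys. fst s = v")
    case True
    then have "rl v w = xs @ [(u,a),(u',b)] @ rl v ys" "rl v w' = xs @ [(u',b),(u,a)] @ rl v ys"
      unfolding w w' rl_def by (auto simp: rm1_append)
    moreover have "wf (xs @ [(u,a),(u',b)] @ rl v ys)"
      using wfw w rl_set[of v ys] wf_subset by auto
    ultimately show ?thesis using sw_swap E by metis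
  next
    case False
    show ?thesis
    proof (cases "u' = v")
      case True
      then have "rl v w = rl v w'" using False uu unfolding w w' rl_def by (auto simp: rm1_append)
      then show ?thesis by simp
    next
      case F2: False
      show ?thesis
      proof (cases "u = v")
        case True
        then have "rl v w = rl v w'" using False uu unfolding w w' rl_def by (auto simp: rm1_append)
        then show ?thesis by simp
      next
        case F3: False
        then have "rl v w = rl v xs @ [(u,a),(u',b)] @ ys" "rl v w' = rl v xs @ [(u',b),(u,a)] @ ys"
          using False F2 unfolding w w' rl_def by (auto simp: rm1_append)
        moreover have "wf (rl v xs @ [(u,a),(u',b)] @ ys)"
          using wfw w rl_set[of v xs] wf_subset by auto
        ultimately show ?thesis using sw_swap E by metis
      qed
    qed
  qed
qed

lemma rl_sw: "(w, w') \<in> sw \<Longrightarrow> (rl v w, rl v w') \<in> sw"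
  using sw_map[of "rl v"] rl_swap by blast

lemma fin_swap:
  assumes "(w, w') \<in> swap_move V E G"
  shows "fin v w = fin v w'"
proof -
  from assms obtain xs u a u' b ys where w: "w = xs @ [(u,a),(u',b)] @ ys"
    and w': "w' = xs @ [(u',b),(u,a)] @ ys" and E: "E u u'"
    unfolding swap_step_E by blast
  have "E u' u" using E Esym by auto
  then show ?thesis unfolding fin_def w w' using E Eirr
    by (auto simp: finr_append)
qed

lemma fin_sw: "(w, w') \<in> sw \<Longrightarrow> fin v w = fin v w'"
  using sw_inv[of "fin v"] fin_swap by blast

lemma lv_sw: "(w, w') \<in> sw \<Longrightarrow> lv v w = lv v w'"
  unfolding lv_def using filter_inv[of "{v}" w w'] Eirr by auto

lemma cancel:
  assumes "(x @ [(v,b)], y @ [(v,c)]) \<in> sw"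
  shows "b = c \<and> (x, y) \<in> sw"
  using lv_sw[OF assms, of v] rl_sw[OF assms, of v] by simp

lemma pair:
  assumes "(x @ [(u,c)], y @ [(v,e)]) \<in> sw" "u \<noteq> v" "wf (x @ [(u,c)])"
  shows "(x, rl u y @ [(v,e)]) \<in> sw \<and> (y, rl u y @ [(u,c)]) \<in> sw"
proof
  show "(x, rl u y @ [(v,e)]) \<in> sw"
    using rl_sw[OF assms(1), of u] assms(2) by (simp add: rl_snoc_diff)
  have 1: "(rl v (x @ [(u,c)]), y) \<in> sw"
    using rl_sw[OF assms(1), of v] by simp
  have 2: "(rl v x, rl v (rl u y @ [(v,e)])) \<in> sw"
    using rl_sw[OF \<open>(x, rl u y @ [(v,e)]) \<in> sw\<close>] .
  have "(rl v x @ [(u,c)], rl u y @ [(u,c)]) \<in> sw"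
    using sw_app_right[OF 2] assms(3) by simp
  then show "(y, rl u y @ [(u,c)]) \<in> sw"
    using 1 assms(2) by (metis rl_snoc_diff sw_sym sw_trans)
qed

lemma fin_ends:
  assumes "fin v w" "wf w"
  shows "(w, rl v w @ [(v, lv v w)]) \<in> sw"
proof -
  have "finr E v r \<Longrightarrow> wf (rev r) \<Longrightarrow>
     (rev r, rev (rm1 v r) @ [(v, snd (hd (filter (\<lambda>s. fst s \<in> {v}) r)))]) \<in> sw" for r
  proof (induction r)
    case Nil then show ?case by simp
  next
    case (Cons s r)
    obtain u a where s: "s = (u,a)" by force
    show ?case
    proof (cases "u = v")
      case True then show ?thesis using s by simp
    next
      case False
      then have E: "E v u" and f: "finr E v r" using Cons.prems s by auto
      have wr: "wf (rev r)" "wf [s]" using Cons.prems by auto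
      have IH: "(rev r, rev (rm1 v r) @ [(v, snd (hd (filter (\<lambda>s. fst s \<in> {v}) r)))]) \<in> sw"
        using Cons.IH f wr by blast
      let ?b = "snd (hd (filter (\<lambda>s. fst s \<in> {v}) r))"
      have "(rev r @ [s], rev (rm1 v r) @ [(v, ?b)] @ [s]) \<in> sw"
        using sw_app_right[OF IH wr(2)] by simp
      moreover have "wf (rev (rm1 v r) @ [(v, ?b), (u,a)] @ [])"
        using sw_wf[OF IH] wr s by simp
      then have "(rev (rm1 v r) @ [(v, ?b), (u,a)] @ [], rev (rm1 v r) @ [(u,a), (v, ?b)] @ []) \<in> sw"
        using sw_swap E by blast
      ultimately show ?thesis using s False by (auto intro: sw_trans)
    qed
  qed
  from this[of "rev w"] assms show ?thesis
    unfolding rl_def lv_def fin_def by (simp add: rev_filter[symmetric] hd_rev)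
qed

lemma ends_fin: "(w, x @ [(v,b)]) \<in> sw \<Longrightarrow> fin v w"
  using fin_sw by fastforce

end


context gp begin

definition app :: "'v \<Rightarrow> 'g \<Rightarrow> ('v \<times> 'g) list \<Rightarrow> ('v \<times> 'g) list" where
  "app v c x = (if c = \<one>\<^bsub>G v\<^esub> then x else x @ [(v,c)])"

definition act :: "('v \<times> 'g) list \<Rightarrow> 'v \<Rightarrow> 'g \<Rightarrow> ('v \<times> 'g) list" where
  "act w v a = (if fin v w then app v (lv v w \<otimes>\<^bsub>G v\<^esub> a) (rl v w) else app v a w)"

definition dbl where "dbl w \<longleftrightarrow> (\<exists>y z v c b. (w, y @ [(v,c),(v,b)] @ z) \<in> sw)"

definition red where "red w \<longleftrightarrow> wf w \<and> (\<forall>s\<in>set w. snd s \<noteq> \<one>\<^bsub>G (fst s)\<^esub>) \<and> \<not> dbl w"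

lemma act_snoc_same: "act (x @ [(v,c)]) v a = app v (c \<otimes>\<^bsub>G v\<^esub> a) x"
  unfolding act_def by simp

lemma act_nonfin: "\<not> fin v u \<Longrightarrow> act u v a = app v a u"
  unfolding act_def by simp

lemma fin_letter:
  assumes "fin v w" "wf w"
  shows "(v, lv v w) \<in> set w" "v \<in> V" "lv v w \<in> carrier (G v)"
proof -
  have "(w, rl v w @ [(v, lv v w)]) \<in> sw" using fin_ends assms by blast
  then have "set (rl v w @ [(v, lv v w)]) = set w" using sw_set by blast
  then show "(v, lv v w) \<in> set w" by (metis Un_iff empty_set list.simps(15) set_append singletonI)
  then show "v \<in> V" "lv v w \<in> carrier (G v)" using assms(2) unfolding wf_word_def by fastforce+
qed

lemma app_set: "set (app v c x) \<subseteq> set x \<union> {(v,c)}"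
  unfolding app_def by auto

lemma wf_app: "wf x \<Longrightarrow> v \<in> V \<Longrightarrow> c \<in> carrier (G v) \<Longrightarrow> wf (app v c x)"
  unfolding app_def by auto

lemma wf_rl: "wf w \<Longrightarrow> wf (rl v w)"
  by (rule wf_subset[OF _ rl_set])

lemma wf_act: "wf u \<Longrightarrow> v \<in> V \<Longrightarrow> a \<in> carrier (G v) \<Longrightarrow> wf (act u v a)"
proof -
  assume a: "wf u" "v \<in> V" "a \<in> carrier (G v)"
  interpret group "G v" using grp a(2) .
  show ?thesis unfolding act_def using a fin_letter[of v u] wf_rl wf_app by auto
qed

lemma app_sw: "(x, x') \<in> sw \<Longrightarrow> v \<in> V \<Longrightarrow> c \<in> carrier (G v) \<Longrightarrow> (app v c x, app v c x') \<in> sw"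
  unfolding app_def using sw_app_right[of x x' "[(v,c)]"] by auto

lemma act_sw:
  assumes "wf u" "(u, u') \<in> sw" "v \<in> V" "a \<in> carrier (G v)"
  shows "(act u v a, act u' v a) \<in> sw"
proof -
  interpret group "G v" using grp assms(3) .
  show ?thesis
  proof (cases "fin v u")
    case True
    then have "fin v u'" using fin_sw assms(2) by blast
    moreover have "lv v u' = lv v u" using lv_sw assms(2) by metis
    moreover have "(rl v u, rl v u') \<in> sw" using rl_sw assms(2) by blast
    ultimately show ?thesis unfolding act_def using True app_sw fin_letter[OF True assms(1)] assms
      by auto
  next
    case False
    then have "\<not> fin v u'" using fin_sw assms(2) by blast
    then show ?thesis unfolding act_def using False app_sw assms by auto
  qed
qed

lemma act_ends:
  assumes "wf u" "(u, x @ [(v,c)]) \<in> sw" "v \<in> V" "a \<in> carrier (G v)"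
  shows "(act u v a, app v (c \<otimes>\<^bsub>G v\<^esub> a) x) \<in> sw"
  using act_sw[OF assms] act_snoc_same by simp

lemma rl_append: "rl v (p @ q) = (if \<exists>s\<in>set q. fst s = v then p @ rl v q else rl v p @ q)"
  unfolding rl_def by (auto simp: rm1_append)

lemma dbl_sw: "(w, w') \<in> sw \<Longrightarrow> dbl w' \<Longrightarrow> dbl w"
  unfolding dbl_def by (meson sw_trans)

lemma dbl_app: "dbl x \<Longrightarrow> wf t \<Longrightarrow> dbl (x @ t)"
  unfolding dbl_def using sw_app_right by fastforce

lemma DBL:
  assumes wfx: "wf (x @ [(v,c)])" and h: "(x @ [(v,c)], y @ [(v',d),(v',d')] @ z) \<in> sw"
  shows "dbl x \<or> fin v x"
proof -
  let ?W = "y @ [(v',d),(v',d')] @ z"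
  have h1: "(x, rl v ?W) \<in> sw" using rl_sw[OF h, of v] by simp
  have "fin v (x @ [(v,c)]) = fin v ?W" by (rule fin_sw[OF h])
  then have fW: "fin v ?W" by simp
  show ?thesis
  proof (cases "\<exists>s\<in>set z. fst s = v")
    case True
    then have "rl v ?W = y @ [(v',d),(v',d')] @ rl v z"
      using rl_append[of v "y @ [(v',d),(v',d')]" z] by simp
    then have "(x, y @ [(v',d),(v',d')] @ rl v z) \<in> sw" using h1 by simp
    then show ?thesis unfolding dbl_def by blast
  next
    case False
    show ?thesis
    proof (cases "v' = v")
      case True
      then have e: "rl v ?W = y @ [(v,d)] @ z"
        using rl_append[of v "y @ [(v',d),(v',d')]" z] False rl_snoc_same[of v "y @ [(v,d)]" d'] by simp
      have "fin v (y @ [(v,d)] @ z)" using fW True unfolding fin_def by (simp add: finr_append)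
      then show ?thesis using fin_sw[OF h1] e by simp
    next
      case F2: False
      then have "rl v ?W = rl v y @ [(v',d),(v',d')] @ z"
        using rl_append[of v "y @ [(v',d),(v',d')]" z] False rl_append[of v y "[(v',d),(v',d')]"]
        by (simp add: rl_snoc_diff)
      then have "(x, rl v y @ [(v',d),(v',d')] @ z) \<in> sw" using h1 by simp
      then show ?thesis unfolding dbl_def by blast
    qed
  qed
qed

lemma fin_dbl:
  assumes "wf (x @ [(v,c)])" "fin v x" shows "dbl (x @ [(v,c)])"
proof -
  have e: "(x, rl v x @ [(v, lv v x)]) \<in> sw" using fin_ends assms by auto
  have "(x @ [(v,c)], rl v x @ [(v, lv v x), (v,c)] @ []) \<in> sw"
    using sw_app_right[OF e, of "[(v,c)]"] assms(1) by simp
  then show ?thesis unfolding dbl_def by blast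
qed

lemma red_act:
  assumes r: "red u" and v: "v \<in> V" and a: "a \<in> carrier (G v)"
  shows "red (act u v a)"
proof -
  interpret group "G v" using grp v .
  have wfu: "wf u" and nid: "\<forall>s\<in>set u. snd s \<noteq> \<one>\<^bsub>G (fst s)\<^esub>" and nd: "\<not> dbl u"
    using r unfolding red_def by auto
  have wfa: "wf (act u v a)" using wf_act wfu v a by blast
  have nid2: "\<forall>s\<in>set (act u v a). snd s \<noteq> \<one>\<^bsub>G (fst s)\<^esub>"
  proof
    fix s assume s: "s \<in> set (act u v a)"
    show "snd s \<noteq> \<one>\<^bsub>G (fst s)\<^esub>"
    proof (cases "fin v u")
      case True
      then show ?thesis using s nid rl_set[of v u] unfolding act_def app_def
        by (auto split: if_splits)
    next
      case False
      then show ?thesis using s nid unfolding act_def app_def by (auto split: if_splits)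
    qed
  qed
  have nd2: "\<not> dbl (act u v a)"
  proof (cases "fin v u")
    case True
    let ?x = "rl v u" and ?c = "lv v u"
    have e: "(u, ?x @ [(v, ?c)]) \<in> sw" using fin_ends True wfu by blast
    have wfe: "wf (?x @ [(v, ?c)])" using sw_wf[OF e] wfu by simp
    have ndx: "\<not> dbl ?x" using dbl_app[of ?x "[(v,?c)]"] wfe dbl_sw[OF e] nd by auto
    have nfx: "\<not> fin v ?x" using fin_dbl[OF wfe] dbl_sw[OF e] nd by blast
    have c: "?c \<in> carrier (G v)" using fin_letter True wfu by blast
    show ?thesis
    proof (cases "?c \<otimes>\<^bsub>G v\<^esub> a = \<one>\<^bsub>G v\<^esub>")
      case True
      then show ?thesis using \<open>fin v u\<close> ndx unfolding act_def app_def by simp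
    next
      case False
      have w2: "wf (?x @ [(v, ?c \<otimes>\<^bsub>G v\<^esub> a)])" using wfe c a v by simp
      have "\<not> dbl (?x @ [(v, ?c \<otimes>\<^bsub>G v\<^esub> a)])"
        using DBL[OF w2] ndx nfx unfolding dbl_def[of "?x @ _"] by blast
      then show ?thesis using \<open>fin v u\<close> False unfolding act_def app_def by simp
    qed
  next
    case False
    show ?thesis
    proof (cases "a = \<one>\<^bsub>G v\<^esub>")
      case True
      then show ?thesis using False nd unfolding act_def app_def by simp
    next
      case F2: False
      have w2: "wf (u @ [(v, a)])" using wfu a v by simp
      have "\<not> dbl (u @ [(v, a)])"
        using DBL[OF w2] nd False unfolding dbl_def[of "u @ _"] by blast
      then show ?thesis using False F2 unfolding act_def app_def by simp
    qed
  qed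
  show ?thesis using wfa nid2 nd2 unfolding red_def by blast
qed

end


context gp begin

lemma red_nfin:
  assumes "red u" "fin v u"
  shows "\<not> fin v (rl v u)"
proof
  assume f: "fin v (rl v u)"
  have wfu: "wf u" using assms unfolding red_def by auto
  have e: "(u, rl v u @ [(v, lv v u)]) \<in> sw" using fin_ends assms(2) wfu by blast
  have wfe: "wf (rl v u @ [(v, lv v u)])" using sw_wf[OF e] wfu by simp
  have "dbl u" using fin_dbl[OF wfe f] dbl_sw[OF e] by blast
  then show False using assms unfolding red_def by auto
qed

lemma merge_law:
  assumes r: "red u" and v: "v \<in> V" and a: "a \<in> carrier (G v)" and b: "b \<in> carrier (G v)"
  shows "act (act u v a) v b = act u v (a \<otimes>\<^bsub>G v\<^esub> b)"
proof -
  interpret group "G v" using grp v .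
  have wfu: "wf u" using r unfolding red_def by auto
  show ?thesis
  proof (cases "fin v u")
    case True
    let ?x = "rl v u" and ?c = "lv v u"
    have nfx: "\<not> fin v ?x" using red_nfin r True by blast
    have c: "?c \<in> carrier (G v)" using fin_letter True wfu by blast
    have e1: "act u v a = app v (?c \<otimes>\<^bsub>G v\<^esub> a) ?x" using True unfolding act_def by simp
    have e2: "act u v (a \<otimes>\<^bsub>G v\<^esub> b) = app v (?c \<otimes>\<^bsub>G v\<^esub> (a \<otimes>\<^bsub>G v\<^esub> b)) ?x" using True unfolding act_def by simp
    show ?thesis
    proof (cases "?c \<otimes>\<^bsub>G v\<^esub> a = \<one>\<^bsub>G v\<^esub>")
      case True
      then have "?c \<otimes>\<^bsub>G v\<^esub> (a \<otimes>\<^bsub>G v\<^esub> b) = b" using a b c by (metis l_one m_assoc)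
      then show ?thesis using e1 e2 True act_nonfin[OF nfx] by (simp add: app_def)
    next
      case False
      then show ?thesis using e1 e2 act_snoc_same a b c by (simp add: app_def m_assoc)
    qed
  next
    case False
    show ?thesis
    proof (cases "a = \<one>\<^bsub>G v\<^esub>")
      case True
      then show ?thesis using b False by (simp add: act_nonfin app_def)
    next
      case F2: False
      then show ?thesis using False act_snoc_same by (simp add: act_nonfin app_def)
    qed
  qed
qed

lemma delete_law:
  assumes r: "red u" and v: "v \<in> V"
  shows "(act u v \<one>\<^bsub>G v\<^esub>, u) \<in> sw"
proof -
  interpret group "G v" using grp v .
  have wfu: "wf u" and nid: "\<forall>s\<in>set u. snd s \<noteq> \<one>\<^bsub>G (fst s)\<^esub>" using r unfolding red_def by auto
  show ?thesis
  proof (cases "fin v u")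
    case True
    have c: "lv v u \<in> carrier (G v)" "(v, lv v u) \<in> set u" using fin_letter True wfu by auto
    then have "lv v u \<noteq> \<one>\<^bsub>G v\<^esub>" using nid by fastforce
    moreover have e: "(u, rl v u @ [(v, lv v u)]) \<in> sw" using fin_ends True wfu by blast
    ultimately show ?thesis using True c unfolding act_def app_def by (simp add: sw_sym)
  next
    case False
    then show ?thesis by (simp add: act_nonfin app_def)
  qed
qed

lemma fin_app: "v \<noteq> v' \<Longrightarrow> E v v' \<Longrightarrow> fin v (app v' c x) = fin v x"
  unfolding app_def by (simp add: fin_snoc_diff)

lemma app_comm:
  assumes "E v1 v2" "wf z" "v1 \<in> V" "v2 \<in> V" "a \<in> carrier (G v1)" "b \<in> carrier (G v2)"
  shows "(app v2 b (app v1 a z), app v1 a (app v2 b z)) \<in> sw"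
proof -
  have "v1 \<noteq> v2" using assms(1) Eirr by auto
  have "(z @ [(v1,a),(v2,b)] @ [], z @ [(v2,b),(v1,a)] @ []) \<in> sw"
    using sw_swap assms by simp
  then show ?thesis unfolding app_def by auto
qed

lemma app_snoc_comm:
  assumes "E v1 v2" "wf x" "v1 \<in> V" "v2 \<in> V" "c \<in> carrier (G v1)" "b \<in> carrier (G v2)"
  shows "(app v2 b (x @ [(v1,c)]), app v2 b x @ [(v1,c)]) \<in> sw"
proof -
  have "(x @ [(v1,c),(v2,b)] @ [], x @ [(v2,b),(v1,c)] @ []) \<in> sw"
    using sw_swap assms by simp
  then show ?thesis unfolding app_def by auto
qed

lemma half:
  assumes wfu: "wf u" and e: "(u, z @ [(v2,c2),(v1,c1)]) \<in> sw" and E: "E v1 v2"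
    and v: "v1 \<in> V" "v2 \<in> V" and a: "a \<in> carrier (G v1)" and b: "b \<in> carrier (G v2)"
  shows "(act (act u v1 a) v2 b,
          app v2 (c2 \<otimes>\<^bsub>G v2\<^esub> b) (app v1 (c1 \<otimes>\<^bsub>G v1\<^esub> a) z)) \<in> sw"
proof -
  interpret g1: group "G v1" using grp v(1) .
  interpret g2: group "G v2" using grp v(2) .
  have wfe: "wf (z @ [(v2,c2),(v1,c1)])" using sw_wf[OF e] wfu by simp
  then have c: "c1 \<in> carrier (G v1)" "c2 \<in> carrier (G v2)" "wf z" by auto
  have E': "E v2 v1" using E Esym by blast
  have 1: "(act u v1 a, app v1 (c1 \<otimes>\<^bsub>G v1\<^esub> a) (z @ [(v2,c2)])) \<in> sw"
    using act_ends[OF wfu _ v(1) a, of "z @ [(v2,c2)]" c1] e by simp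
  have 2: "(app v1 (c1 \<otimes>\<^bsub>G v1\<^esub> a) (z @ [(v2,c2)]), app v1 (c1 \<otimes>\<^bsub>G v1\<^esub> a) z @ [(v2,c2)]) \<in> sw"
    using app_snoc_comm[OF E' c(3) v(2) v(1) c(2)] c a by simp
  have 3: "(act u v1 a, app v1 (c1 \<otimes>\<^bsub>G v1\<^esub> a) z @ [(v2,c2)]) \<in> sw"
    using 1 2 sw_trans by blast
  have "wf (act u v1 a)" using wf_act wfu v a by blast
  from act_ends[OF this 3 v(2) b] show ?thesis .
qed

lemma swap_case2:
  assumes wfu: "wf u" and f1: "fin v1 u" and f2: "\<not> fin v2 u" and E: "E v1 v2"
    and v: "v1 \<in> V" "v2 \<in> V" and a: "a \<in> carrier (G v1)" and b: "b \<in> carrier (G v2)"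
  shows "(act (act u v1 a) v2 b, act (act u v2 b) v1 a) \<in> sw"
proof -
  interpret g1: group "G v1" using grp v(1) .
  interpret g2: group "G v2" using grp v(2) .
  have ne: "v1 \<noteq> v2" using E Eirr by auto
  have E': "E v2 v1" using E Esym by blast
  let ?x = "rl v1 u" and ?c = "lv v1 u"
  have e: "(u, ?x @ [(v1, ?c)]) \<in> sw" using fin_ends f1 wfu by blast
  have wfe: "wf (?x @ [(v1, ?c)])" using sw_wf[OF e] wfu by simp
  then have wfx: "wf ?x" and c: "?c \<in> carrier (G v1)" by auto
  have nfx: "\<not> fin v2 ?x"
  proof
    assume "fin v2 ?x"
    then have e2: "(?x, rl v2 ?x @ [(v2, lv v2 ?x)]) \<in> sw" using fin_ends wfx by blast
    have e3: "(?x @ [(v1,?c)], rl v2 ?x @ [(v2, lv v2 ?x), (v1,?c)] @ []) \<in> sw"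
      using sw_app_right[OF e2, of "[(v1,?c)]"] wfe by simp
    have "wf (rl v2 ?x @ [(v2, lv v2 ?x), (v1,?c)] @ [])"
      using sw_wf[OF e3] wfe by simp
    then have e4: "(rl v2 ?x @ [(v2, lv v2 ?x), (v1,?c)] @ [], rl v2 ?x @ [(v1,?c),(v2, lv v2 ?x)] @ []) \<in> sw"
      using sw_swap E' by blast
    have "(u, (rl v2 ?x @ [(v1,?c)]) @ [(v2, lv v2 ?x)]) \<in> sw"
      using sw_trans[OF e sw_trans[OF e3 e4]] by simp
    then have "fin v2 u" using ends_fin by blast
    then show False using f2 by simp
  qed
  let ?A = "app v1 (?c \<otimes>\<^bsub>G v1\<^esub> a) ?x"
  have wfA: "wf ?A" using wf_app wfx v c a by auto
  have 1: "(act u v1 a, ?A) \<in> sw" using act_ends[OF wfu e v(1) a] .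
  have "(act (act u v1 a) v2 b, act ?A v2 b) \<in> sw"
    using act_sw[OF wf_act[OF wfu v(1) a] 1 v(2) b] .
  moreover have "act ?A v2 b = app v2 b ?A"
    using act_nonfin fin_app[OF ne[symmetric] E'] nfx by metis
  ultimately have R1: "(act (act u v1 a) v2 b, app v2 b ?A) \<in> sw" by simp
  have nfu: "act u v2 b = app v2 b u" using act_nonfin f2 by blast
  have 2: "(app v2 b u, app v2 b (?x @ [(v1,?c)])) \<in> sw" using app_sw[OF e v(2) b] .
  have 3: "(app v2 b (?x @ [(v1,?c)]), app v2 b ?x @ [(v1,?c)]) \<in> sw"
    using app_snoc_comm[OF E wfx v c b] .
  have wfB: "wf (app v2 b u)" using wf_app wfu v b by auto
  have "(act (app v2 b u) v1 a, app v1 (?c \<otimes>\<^bsub>G v1\<^esub> a) (app v2 b ?x)) \<in> sw"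
    using act_ends[OF wfB _ v(1) a] 2 3 sw_trans by blast
  then have R2: "(act (act u v2 b) v1 a, app v1 (?c \<otimes>\<^bsub>G v1\<^esub> a) (app v2 b ?x)) \<in> sw"
    using nfu by simp
  have "(app v2 b ?A, app v1 (?c \<otimes>\<^bsub>G v1\<^esub> a) (app v2 b ?x)) \<in> sw"
    using app_comm[OF E wfx v _ b] c a by simp
  then show ?thesis using R1 R2 sw_sym sw_trans by meson
qed

lemma swap_law:
  assumes wfu: "wf u" and E: "E v1 v2"
    and v: "v1 \<in> V" "v2 \<in> V" and a: "a \<in> carrier (G v1)" and b: "b \<in> carrier (G v2)"
  shows "(act (act u v1 a) v2 b, act (act u v2 b) v1 a) \<in> sw"
proof -
  interpret g1: group "G v1" using grp v(1) .
  interpret g2: group "G v2" using grp v(2) .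
  have ne: "v1 \<noteq> v2" using E Eirr by auto
  have E': "E v2 v1" using E Esym by blast
  consider "fin v1 u" "fin v2 u" | "fin v1 u" "\<not> fin v2 u" | "\<not> fin v1 u" "fin v2 u"
    | "\<not> fin v1 u" "\<not> fin v2 u" by blast
  then show ?thesis
  proof cases
    case 1
    let ?x1 = "rl v1 u" and ?c1 = "lv v1 u" and ?x2 = "rl v2 u" and ?c2 = "lv v2 u"
    have e1: "(u, ?x1 @ [(v1, ?c1)]) \<in> sw" using fin_ends 1 wfu by blast
    have e2: "(u, ?x2 @ [(v2, ?c2)]) \<in> sw" using fin_ends 1 wfu by blast
    have wfe1: "wf (?x1 @ [(v1, ?c1)])" using sw_wf[OF e1] wfu by simp
    have "(?x1 @ [(v1, ?c1)], ?x2 @ [(v2, ?c2)]) \<in> sw" using e1 e2 sw_sym sw_trans by blast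
    from pair[OF this ne wfe1] obtain z where
      p1: "(?x1, z @ [(v2,?c2)]) \<in> sw" and p2: "(?x2, z @ [(v1,?c1)]) \<in> sw" by blast
    have wfe2: "wf (?x2 @ [(v2, ?c2)])" using sw_wf[OF e2] wfu by simp
    have "(?x1 @ [(v1, ?c1)], z @ [(v2,?c2),(v1,?c1)]) \<in> sw"
      using sw_app_right[OF p1, of "[(v1,?c1)]"] wfe1 by simp
    then have q1: "(u, z @ [(v2,?c2),(v1,?c1)]) \<in> sw" using e1 sw_trans by blast
    have "(?x2 @ [(v2, ?c2)], z @ [(v1,?c1),(v2,?c2)]) \<in> sw"
      using sw_app_right[OF p2, of "[(v2,?c2)]"] wfe2 by simp
    then have q2: "(u, z @ [(v1,?c1),(v2,?c2)]) \<in> sw" using e2 sw_trans by blast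
    have wfz: "wf z" using sw_wf[OF q1] wfu by simp
    have c: "?c1 \<in> carrier (G v1)" "?c2 \<in> carrier (G v2)" using fin_letter 1 wfu by auto
    note h1 = half[OF wfu q1 E v a b]
    note h2 = half[OF wfu q2 E' v(2) v(1) b a]
    have "(app v2 (?c2 \<otimes>\<^bsub>G v2\<^esub> b) (app v1 (?c1 \<otimes>\<^bsub>G v1\<^esub> a) z),
           app v1 (?c1 \<otimes>\<^bsub>G v1\<^esub> a) (app v2 (?c2 \<otimes>\<^bsub>G v2\<^esub> b) z)) \<in> sw"
      using app_comm[OF E wfz v] c a b by simp
    then show ?thesis using h1 h2 sw_sym sw_trans by meson
  next
    case 2
    then show ?thesis using swap_case2[OF wfu _ _ E v a b] by blast
  next
    case 3
    then show ?thesis using swap_case2[OF wfu _ _ E' v(2) v(1) b a] sw_sym by blast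
  next
    case 4
    have "act u v1 a = app v1 a u" "act u v2 b = app v2 b u" using 4 act_nonfin by auto
    moreover have "act (app v1 a u) v2 b = app v2 b (app v1 a u)"
      using act_nonfin fin_app[OF ne[symmetric] E'] 4 by metis
    moreover have "act (app v2 b u) v1 a = app v1 a (app v2 b u)"
      using act_nonfin fin_app[OF ne E] 4 by metis
    ultimately show ?thesis using app_comm[OF E wfu v a b] by simp
  qed
qed

end


context gp begin

definition Fo :: "('v \<times> 'g) list \<Rightarrow> ('v \<times> 'g) list \<Rightarrow> ('v \<times> 'g) list" where
  "Fo u w = foldl (\<lambda>u s. act u (fst s) (snd s)) u w"

lemma Fo_Nil[simp]: "Fo u [] = u" unfolding Fo_def by simp
lemma Fo_append: "Fo u (p @ q) = Fo (Fo u p) q" unfolding Fo_def by simp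
lemma Fo_Cons: "Fo u ((v,a) # q) = Fo (act u v a) q" unfolding Fo_def by simp

lemma Fo_wf: "wf u \<Longrightarrow> wf w \<Longrightarrow> wf (Fo u w)"
proof (induction w arbitrary: u)
  case (Cons s w)
  obtain v a where s: "s = (v,a)" by force
  show ?case using Cons wf_act[of u v a] s by (simp add: Fo_Cons)
qed simp

lemma Fo_red: "red u \<Longrightarrow> wf w \<Longrightarrow> red (Fo u w)"
proof (induction w arbitrary: u)
  case (Cons s w)
  obtain v a where s: "s = (v,a)" by force
  show ?case using Cons red_act[of u v a] s by (simp add: Fo_Cons)
qed simp

lemma Fo_sw: "wf u \<Longrightarrow> (u, u') \<in> sw \<Longrightarrow> wf w \<Longrightarrow> (Fo u w, Fo u' w) \<in> sw"
proof (induction w arbitrary: u u')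
  case (Cons s w)
  obtain v a where s: "s = (v,a)" by force
  have "(act u v a, act u' v a) \<in> sw" using act_sw Cons.prems s by simp
  moreover have "wf (act u v a)" using wf_act Cons.prems s by simp
  ultimately show ?case using Cons s by (simp add: Fo_Cons)
qed simp

lemma red_Nil: "red []" unfolding red_def dbl_def using sw_set by fastforce

lemma red_prefix: "red (x @ t) \<Longrightarrow> red x"
  unfolding red_def using dbl_app by auto

lemma Fo_reduced: "red w \<Longrightarrow> (Fo [] w, w) \<in> sw"
proof (induction w rule: rev_induct)
  case (snoc s w0)
  obtain v a where s: "s = (v,a)" by force
  have r0: "red w0" using red_prefix snoc.prems by blast
  have wfw: "wf (w0 @ [(v,a)])" using snoc.prems s unfolding red_def by auto
  then have wf0: "wf w0" and va: "v \<in> V" "a \<in> carrier (G v)" by auto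
  have IH: "(Fo [] w0, w0) \<in> sw" using snoc.IH r0 by blast
  have "(act (Fo [] w0) v a, act w0 v a) \<in> sw"
    using act_sw[OF Fo_wf[OF _ wf0] IH va] by simp
  moreover have "\<not> fin v w0" using fin_dbl[OF wfw] snoc.prems s unfolding red_def by auto
  moreover have "a \<noteq> \<one>\<^bsub>G v\<^esub>" using snoc.prems s unfolding red_def by auto
  ultimately show ?case using s by (simp add: Fo_append Fo_Cons act_nonfin app_def)
qed simp

lemma G_closed: "v \<in> V \<Longrightarrow> a \<in> carrier (G v) \<Longrightarrow> b \<in> carrier (G v) \<Longrightarrow> a \<otimes>\<^bsub>G v\<^esub> b \<in> carrier (G v)"
proof -
  assume "v \<in> V" then interpret group "G v" using grp by blast
  show "a \<in> carrier (G v) \<Longrightarrow> b \<in> carrier (G v) \<Longrightarrow> a \<otimes>\<^bsub>G v\<^esub> b \<in> carrier (G v)" by simp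
qed

lemma move_wf: "(w, w') \<in> gp_move V E G \<Longrightarrow> wf w \<and> wf w'"
  unfolding gp_move_def swap_move_def merge_move_def delete_move_def
  by (auto intro: G_closed)

lemma move_Fo:
  assumes "(w, w') \<in> gp_move V E G"
  shows "(Fo [] w, Fo [] w') \<in> sw"
proof -
  consider "(w, w') \<in> swap_move V E G" | "(w, w') \<in> merge_move V G" | "(w, w') \<in> delete_move V G"
    using assms unfolding gp_move_def by blast
  then show ?thesis
  proof cases
    case 1
    then obtain xs u a v b ys where w: "w = xs @ [(u,a),(v,b)] @ ys" and w': "w' = xs @ [(v,b),(u,a)] @ ys"
      and wfw: "wf w" and E: "E u v" unfolding swap_step_E by blast
    let ?U = "Fo [] xs"
    have wU: "wf ?U" "red ?U" using Fo_wf Fo_red red_Nil wfw w by auto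
    have l: "u \<in> V" "a \<in> carrier (G u)" "v \<in> V" "b \<in> carrier (G v)" "wf ys" using wfw w by auto
    have "(act (act ?U u a) v b, act (act ?U v b) u a) \<in> sw"
      using swap_law[OF wU(1) E] l by blast
    moreover have "wf (act (act ?U u a) v b)" using wf_act wU l by simp
    ultimately show ?thesis using Fo_sw l w w' by (simp add: Fo_append Fo_Cons)
  next
    case 2
    then obtain xs v a b ys where w: "w = xs @ [(v,a),(v,b)] @ ys" and w': "w' = xs @ [(v, a \<otimes>\<^bsub>G v\<^esub> b)] @ ys"
      and wfw: "wf w" unfolding merge_move_def by blast
    let ?U = "Fo [] xs"
    have wU: "wf ?U" "red ?U" using Fo_wf Fo_red red_Nil wfw w by auto
    have l: "v \<in> V" "a \<in> carrier (G v)" "b \<in> carrier (G v)" using wfw w by auto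
    show ?thesis using merge_law[OF wU(2) l] w w' by (simp add: Fo_append Fo_Cons)
  next
    case 3
    then obtain xs v ys where w: "w = xs @ [(v, \<one>\<^bsub>G v\<^esub>)] @ ys" and w': "w' = xs @ ys"
      and wfw: "wf w" unfolding delete_move_def by blast
    let ?U = "Fo [] xs"
    have wU: "wf ?U" "red ?U" using Fo_wf Fo_red red_Nil wfw w by auto
    have l: "v \<in> V" "wf ys" using wfw w by auto
    have "wf (act ?U v \<one>\<^bsub>G v\<^esub>)" using wf_act wU l grp by (simp add: monoid.one_closed group.is_monoid)
    then show ?thesis using delete_law[OF wU(2) l(1)] Fo_sw l w w' by (simp add: Fo_append Fo_Cons)
  qed
qed

lemma equiv_Fo:
  assumes "(w, w') \<in> gp_equiv V E G"
  shows "(Fo [] w, Fo [] w') \<in> sw"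
proof -
  have "(w, w') \<in> (gp_move V E G \<union> (gp_move V E G)\<inverse>)\<^sup>*" using assms unfolding gp_equiv_def by blast
  then show ?thesis
  proof (induction rule: rtrancl_induct)
    case (step y z)
    then have "(Fo [] y, Fo [] z) \<in> sw" using move_Fo sw_sym by blast
    then show ?case using step.IH sw_trans by blast
  qed simp
qed

lemma reduced_red: "reduced_word V E G w \<longleftrightarrow> red w"
proof
  assume r: "reduced_word V E G w"
  then have wf: "wf w" unfolding reduced_word_def by blast
  have nid: "\<forall>s\<in>set w. snd s \<noteq> \<one>\<^bsub>G (fst s)\<^esub>" using r unfolding reduced_word_def by fastforce
  have "\<not> dbl w"
  proof
    assume "dbl w"
    then obtain y z v c b where "(w, y @ [(v,c),(v,b)] @ z) \<in> sw" unfolding dbl_def by blast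
    then show False using r unfolding reduced_word_def by blast
  qed
  then show "red w" using wf nid unfolding red_def by blast
next
  assume r: "red w"
  have "\<forall>w'. (w, w') \<in> sw \<longrightarrow> (\<forall>(v,a)\<in>set w'. a \<noteq> \<one>\<^bsub>G v\<^esub>) \<and>
        (\<forall>xs u a v b ys. w' = xs @ [(u,a),(v,b)] @ ys \<longrightarrow> u \<noteq> v)"
  proof (intro allI impI)
    fix w' assume sw: "(w, w') \<in> sw"
    have "\<forall>(v,a)\<in>set w'. a \<noteq> \<one>\<^bsub>G v\<^esub>" using r sw_set[OF sw] unfolding red_def by fastforce
    moreover have "\<forall>xs u a v b ys. w' = xs @ [(u,a),(v,b)] @ ys \<longrightarrow> u \<noteq> v"
      using r sw unfolding red_def dbl_def by blast
    ultimately show "(\<forall>(v,a)\<in>set w'. a \<noteq> \<one>\<^bsub>G v\<^esub>) \<and>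
        (\<forall>xs u a v b ys. w' = xs @ [(u,a),(v,b)] @ ys \<longrightarrow> u \<noteq> v)" by blast
  qed
  then show "reduced_word V E G w" using r unfolding reduced_word_def red_def by blast
qed

theorem normal_form:
  assumes "(w0, u) \<in> gp_equiv V E G" "(w0, w) \<in> gp_equiv V E G"
    "reduced_word V E G u" "reduced_word V E G w"
  shows "(u, w) \<in> sw"
proof -
  have "(Fo [] u, Fo [] w) \<in> sw" using equiv_Fo[OF assms(1)] equiv_Fo[OF assms(2)] sw_sym sw_trans by blast
  moreover have "(Fo [] u, u) \<in> sw" "(Fo [] w, w) \<in> sw" using Fo_reduced reduced_red assms by auto
  ultimately show ?thesis using sw_sym sw_trans by blast
qed

end


fun pe :: "'v set \<Rightarrow> ('v \<times> 'g) list \<Rightarrow> ('v \<times> 'g) list" where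
  "pe S [] = []"
| "pe S (s # r) = (if fst s \<in> S then pe (S - {fst s}) r else s # pe S r)"

definition peel where "peel C w = rev (pe C (rev w))"

lemma pe_append: "pe S (p @ q) = pe S p @ pe (S - fst ` set p) q"
proof (induction p arbitrary: S)
  case (Cons s p)
  show ?case
  proof (cases "fst s \<in> S")
    case True
    then show ?thesis using Cons[of "S - {fst s}"] by (simp add: Diff_insert2[symmetric] insert_commute)
  next
    case False
    then have "S - insert (fst s) (fst ` set p) = S - fst ` set p" by blast
    then show ?thesis using Cons[of S] False by simp
  qed
qed simp

lemma pe_set: "set (pe S r) \<subseteq> set r"
  by (induction r arbitrary: S) auto

lemma pe_length: "length (pe S r) \<le> length r"
  by (induction r arbitrary: S) (auto simp: le_SucI)

lemma pe_mem: "s \<in> set r \<Longrightarrow> s \<in> set (pe S r) \<or> (fst s \<in> S \<and> s = hd (filter (\<lambda>t. fst t = fst s) r))"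
proof (induction r arbitrary: S)
  case (Cons t r)
  show ?case
  proof (cases "fst t \<in> S")
    case True
    show ?thesis
    proof (cases "s = t")
      case True then show ?thesis using \<open>fst t \<in> S\<close> by simp
    next
      case False
      then have "s \<in> set r" using Cons.prems by simp
      from Cons.IH[OF this, of "S - {fst t}"] show ?thesis using True by auto
    qed
  next
    case False
    show ?thesis
    proof (cases "s = t")
      case True then show ?thesis using False by simp
    next
      case F2: False
      then have "s \<in> set r" using Cons.prems by simp
      from Cons.IH[OF this, of S] show ?thesis using False by auto
    qed
  qed
qed simp

lemma drop_suffix:
  assumes "length q \<le> d"
  shows "set q \<subseteq> set (drop (length (A @ q) - d) (A @ q))"
proof -
  have "length (A @ q) - d \<le> length A" using assms by simp
  then have "drop (length (A @ q) - d) (A @ q) = drop (length (A @ q) - d) A @ q" by simp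
  then show ?thesis by simp
qed

context gp begin

lemma peel_swap:
  assumes "(w, w') \<in> swap_move V E G"
  shows "(peel C w, peel C w') \<in> sw"
proof -
  from assms obtain xs u a v b ys where w: "w = xs @ [(u,a),(v,b)] @ ys"
    and w': "w' = xs @ [(v,b),(u,a)] @ ys" and wfw: "wf w" and E: "E u v"
    unfolding swap_step_E by blast
  have uv: "u \<noteq> v" using E Eirr by auto
  define C' where "C' = C - fst ` set (rev ys)"
  define C'' where "C'' = C' - {u, v}"
  define P where "P = rev (pe C'' (rev xs))"
  define Q where "Q = rev (pe C (rev ys))"
  have s1: "fst ` set [(v,b),(u,a)] = {u,v}" "fst ` set [(u,a),(v,b)] = {u,v}" by auto
  have r1: "rev w = rev ys @ [(v,b),(u,a)] @ rev xs" "rev w' = rev ys @ [(u,a),(v,b)] @ rev xs"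
    unfolding w w' by simp_all
  have "pe C (rev w) = pe C (rev ys) @ pe C' [(v,b),(u,a)] @ pe C'' (rev xs)"
    unfolding C''_def C'_def by (simp only: r1 pe_append s1)
  then have e1: "peel C w = P @ rev (pe C' [(v,b),(u,a)]) @ Q"
    unfolding peel_def P_def Q_def by simp
  have "pe C (rev w') = pe C (rev ys) @ pe C' [(u,a),(v,b)] @ pe C'' (rev xs)"
    unfolding C''_def C'_def by (simp only: r1 pe_append s1)
  then have e2: "peel C w' = P @ rev (pe C' [(u,a),(v,b)]) @ Q"
    unfolding peel_def P_def Q_def by simp
  have wfP: "wf P" using wfw w pe_set[of C'' "rev xs"] wf_subset unfolding P_def by auto
  have wfQ: "wf Q" using wfw w pe_set[of C "rev ys"] wf_subset unfolding Q_def by auto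
  have wfm: "wf [(u,a),(v,b)]" using wfw w by auto
  show ?thesis
  proof (cases "u \<in> C' \<or> v \<in> C'")
    case True
    then have "pe C' [(v,b),(u,a)] = pe C' [(u,a),(v,b)]" using uv by auto
    then show ?thesis using e1 e2 by simp
  next
    case False
    then have "peel C w = P @ [(u,a),(v,b)] @ Q" "peel C w' = P @ [(v,b),(u,a)] @ Q"
      using e1 e2 by auto
    moreover have "wf (P @ [(u,a),(v,b)] @ Q)" using wfP wfQ wfm by simp
    ultimately show ?thesis using sw_swap E by metis
  qed
qed

lemma peel_sw: "(w, w') \<in> sw \<Longrightarrow> (peel C w, peel C w') \<in> sw"
  using sw_map[of "peel C"] peel_swap by blast

definition Lset where "Lset u = {s. \<exists>x. (u, x @ [s]) \<in> sw}"
definition Dset where "Dset u d = {s. \<exists>w. (u, w) \<in> sw \<and> s \<in> set (drop (length w - d) w)}"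

lemma Lset_sub: "Lset u \<subseteq> set u"
  unfolding Lset_def using sw_set by fastforce

lemma Dset_sub: "Dset u d \<subseteq> set u"
  unfolding Dset_def using sw_set set_drop_subset by fastforce

lemma L_card:
  assumes finV: "finite V" and wfu: "wf u"
  shows "card (Lset u) \<le> clique_number V E"
proof -
  have inj: "inj_on fst (Lset u)"
  proof
    fix s1 s2 assume s: "s1 \<in> Lset u" "s2 \<in> Lset u" "fst s1 = fst s2"
    obtain x1 x2 where "(u, x1 @ [s1]) \<in> sw" "(u, x2 @ [s2]) \<in> sw" using s unfolding Lset_def by blast
    then have h: "(x1 @ [s1], x2 @ [s2]) \<in> sw" using sw_sym sw_trans by blast
    obtain v b1 b2 where "s1 = (v,b1)" "s2 = (v,b2)" using s(3) by (metis prod.collapse)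
    then show "s1 = s2" using cancel h by auto
  qed
  let ?K = "fst ` Lset u"
  have KV: "?K \<subseteq> V" using Lset_sub wfu unfolding wf_word_def by fastforce
  have cl: "\<forall>x\<in>?K. \<forall>y\<in>?K. x \<noteq> y \<longrightarrow> E x y"
  proof (intro ballI impI)
    fix v1 v2 assume v: "v1 \<in> ?K" "v2 \<in> ?K" "v1 \<noteq> v2"
    obtain c1 c2 x1 x2 where h1: "(u, x1 @ [(v1,c1)]) \<in> sw" and h2: "(u, x2 @ [(v2,c2)]) \<in> sw"
      using v unfolding Lset_def by force
    have h: "(x1 @ [(v1,c1)], x2 @ [(v2,c2)]) \<in> sw" using h1 h2 sw_sym sw_trans by blast
    have wf1: "wf (x1 @ [(v1,c1)])" using sw_wf[OF h1] wfu by simp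
    have wf2: "wf (x2 @ [(v2,c2)])" using sw_wf[OF h2] wfu by simp
    obtain z where p1: "(x1, z @ [(v2,c2)]) \<in> sw" and p2: "(x2, z @ [(v1,c1)]) \<in> sw"
      using pair[OF h v(3) wf1] by blast
    have "(x1 @ [(v1,c1)], z @ [(v2,c2),(v1,c1)]) \<in> sw"
      using sw_app_right[OF p1, of "[(v1,c1)]"] wf1 by simp
    then have q1: "(u, z @ [(v2,c2),(v1,c1)]) \<in> sw" using h1 sw_trans by blast
    have "(x2 @ [(v2,c2)], z @ [(v1,c1),(v2,c2)]) \<in> sw"
      using sw_app_right[OF p2, of "[(v2,c2)]"] wf2 by simp
    then have q2: "(u, z @ [(v1,c1),(v2,c2)]) \<in> sw" using h2 sw_trans by blast
    have q: "(z @ [(v2,c2),(v1,c1)], z @ [(v1,c1),(v2,c2)]) \<in> sw" using q1 q2 sw_sym sw_trans by blast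
    show "E v1 v2"
    proof (rule ccontr)
      assume nE: "\<not> E v1 v2"
      have ne: "\<And>x y. x \<in> {v1,v2} \<Longrightarrow> y \<in> {v1,v2} \<Longrightarrow> \<not> E x y" using nE Eirr Esym by blast
      have "filter (\<lambda>s. fst s \<in> {v1,v2}) (z @ [(v2,c2),(v1,c1)]) = filter (\<lambda>s. fst s \<in> {v1,v2}) (z @ [(v1,c1),(v2,c2)])"
        by (rule filter_inv[of "{v1,v2}", OF ne q])
      then show False using v(3) by simp
    qed
  qed
  have fin: "finite {card C | C. C \<subseteq> V \<and> (\<forall>x\<in>C. \<forall>y\<in>C. x \<noteq> y \<longrightarrow> E x y)}"
  proof (rule finite_subset)
    show "{card C | C. C \<subseteq> V \<and> (\<forall>x\<in>C. \<forall>y\<in>C. x \<noteq> y \<longrightarrow> E x y)} \<subseteq> card ` Pow V" by auto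
  qed (use finV in simp)
  have "card ?K \<in> {card C | C. C \<subseteq> V \<and> (\<forall>x\<in>C. \<forall>y\<in>C. x \<noteq> y \<longrightarrow> E x y)}" using KV cl by blast
  then have "card ?K \<le> clique_number V E" unfolding clique_number_def using fin Max_ge by blast
  then show ?thesis using card_image[OF inj] by simp
qed

lemma D_sub:
  assumes wfu: "wf u"
  shows "Dset u (Suc d) \<subseteq> Lset u \<union> Dset (peel {v. fin v u} u) d"
proof
  fix s assume "s \<in> Dset u (Suc d)"
  then obtain w where uw: "(u, w) \<in> sw" and sq: "s \<in> set (drop (length w - Suc d) w)"
    unfolding Dset_def by blast
  let ?C = "{v. fin v u}"
  define n where "n = length w - Suc d"
  define p where "p = take n w"
  define q where "q = drop n w"
  have wpq: "w = p @ q" unfolding p_def q_def by simp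
  have lq: "length q \<le> Suc d" unfolding q_def n_def by simp
  have sq': "s \<in> set q" using sq unfolding q_def n_def by simp
  have wfw: "wf w" using sw_wf[OF uw] wfu by simp
  show "s \<in> Lset u \<union> Dset (peel ?C u) d"
  proof (cases "s \<in> Lset u")
    case True then show ?thesis by simp
  next
    case notL: False
    have qne: "q \<noteq> []" using sq' by auto
    define t where "t = last q"
    have qq: "butlast q @ [t] = q" unfolding t_def using qne by simp
    have rq: "rev q = t # rev (butlast q)" using arg_cong[OF qq, of rev] by simp
    have "(u, (p @ butlast q) @ [(fst t, snd t)]) \<in> sw" using uw qq unfolding wpq by simp
    then have "fin (fst t) u" by (rule ends_fin)
    then have tC: "fst t \<in> ?C" by simp
    define q' where "q' = rev (pe ?C (rev q))"
    define A where "A = rev (pe (?C - fst ` set (rev q)) (rev p))"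
    have pw: "peel ?C w = A @ q'"
      unfolding peel_def q'_def wpq A_def by (simp add: pe_append)
    have lq': "length q' \<le> d"
    proof -
      have "length q' = length (pe (?C - {fst t}) (rev (butlast q)))" unfolding q'_def rq using tC by simp
      also have "\<dots> \<le> length (rev (butlast q))" by (rule pe_length)
      finally show ?thesis using lq by simp
    qed
    have sq'': "s \<in> set q'"
    proof -
      have "s \<in> set (rev q)" using sq' by simp
      from pe_mem[OF this, of ?C]
      show ?thesis
      proof
        assume "s \<in> set (pe ?C (rev q))" then show ?thesis unfolding q'_def by simp
      next
        assume a: "fst s \<in> ?C \<and> s = hd (filter (\<lambda>t. fst t = fst s) (rev q))"
        let ?v = "fst s"
        let ?P = "\<lambda>t. fst t = fst s"
        have "fin ?v w" using a fin_sw[OF uw] by simp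
        then have e: "(w, rl ?v w @ [(?v, lv ?v w)]) \<in> sw" using fin_ends wfw by blast
        have "s \<in> set (filter ?P (rev q))" using sq' by simp
        then have ne: "filter ?P (rev q) \<noteq> []" by (metis empty_iff empty_set)
        have "hd (filter ?P (rev q)) = hd (filter ?P (rev w))"
          using ne unfolding wpq by simp
        also have "\<dots> = last (filter ?P w)" by (simp add: rev_filter[symmetric] hd_rev)
        finally have s1: "s = last (filter ?P w)" using a by simp
        have "s \<in> set (filter ?P w)" using sq' wpq by simp
        then have fne: "filter ?P w \<noteq> []" by (metis empty_iff empty_set)
        have "?P (last (filter ?P w))" using last_in_set[OF fne] by auto
        moreover have "lv ?v w = snd (last (filter ?P w))" unfolding lv_def by simp
        ultimately have "snd s = lv ?v w" using s1 by simp
        then have "s = (?v, lv ?v w)" by (cases s) simp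
        then have "(u, rl ?v w @ [s]) \<in> sw" using uw e sw_trans by simp
        then have "s \<in> Lset u" unfolding Lset_def by blast
        then show ?thesis using notL by simp
      qed
    qed
    have "(peel ?C u, peel ?C w) \<in> sw" using peel_sw uw by blast
    moreover have "s \<in> set (drop (length (peel ?C w) - d) (peel ?C w))"
      using drop_suffix[OF lq', of A] sq'' pw by auto
    ultimately show ?thesis unfolding Dset_def by blast
  qed
qed

lemma D_bound:
  assumes finV: "finite V"
  shows "wf u \<Longrightarrow> finite (Dset u d) \<and> card (Dset u d) \<le> d * clique_number V E"
proof (induction d arbitrary: u)
  case 0
  have "Dset u 0 = {}" unfolding Dset_def by simp
  then show ?case by simp
next
  case (Suc d)
  let ?u' = "peel {v. fin v u} u"
  have wf': "wf ?u'" using Suc.prems pe_set wf_subset unfolding peel_def by (metis set_rev wf_rev)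
  have fD: "finite (Dset u (Suc d))" using Dset_sub finite_subset by blast
  have fL: "finite (Lset u)" using Lset_sub finite_subset by blast
  have IH: "finite (Dset ?u' d)" "card (Dset ?u' d) \<le> d * clique_number V E" using Suc.IH wf' by auto
  have "card (Dset u (Suc d)) \<le> card (Lset u \<union> Dset ?u' d)"
    using card_mono[OF _ D_sub[OF Suc.prems]] fL IH by blast
  also have "\<dots> \<le> card (Lset u) + card (Dset ?u' d)" by (rule card_Un_le)
  also have "\<dots> \<le> clique_number V E + d * clique_number V E" using L_card[OF finV Suc.prems] IH by simp
  finally show ?case using fD by simp
qed

end


theorem mainTheorem7:
  fixes V :: "'v set" and E :: "'v \<Rightarrow> 'v \<Rightarrow> bool" and G :: "'v \<Rightarrow> 'g monoid"
    and g :: "('v \<times> 'g) list set" and d :: nat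
  assumes "finite V"
    and "\<forall>u v. E u v \<longrightarrow> E v u"
    and "\<forall>v. \<not> E v v"
    and "\<forall>v\<in>V. group (G v)"
    and "g \<in> gp_elems V E G"
    and "d \<ge> 1"
  shows "finite (d_tail V E G g d) \<and> card (d_tail V E G g d) \<le> d * clique_number V E"
proof -
  have "gp V E G" unfolding gp_def using assms(2-4) by blast
  then interpret gp V E G .
  from assms(5) obtain w0 where g: "g = gp_equiv V E G `` {w0}"
    unfolding gp_elems_def by (auto elim: quotientE)
  show ?thesis
  proof (cases "\<exists>u. u \<in> g \<and> reduced_word V E G u")
    case True
    then obtain u where u: "u \<in> g" "reduced_word V E G u" by blast
    have wfu: "wf_word V G u" using u(2) unfolding reduced_word_def by blast
    have sub: "d_tail V E G g d \<subseteq> Dset u d"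
    proof
      fix s assume "s \<in> d_tail V E G g d"
      then obtain w where w: "w \<in> g" "reduced_word V E G w" "s \<in> set (drop (length w - d) w)"
        unfolding d_tail_def by blast
      have "(w0, u) \<in> gp_equiv V E G" "(w0, w) \<in> gp_equiv V E G" using u w g by auto
      then have "(u, w) \<in> (swap_move V E G)\<^sup>*" using normal_form u(2) w(2) by blast
      then show "s \<in> Dset u d" unfolding Dset_def using w(3) by blast
    qed
    have b: "finite (Dset u d)" "card (Dset u d) \<le> d * clique_number V E"
      using D_bound[OF assms(1) wfu] by auto
    have "finite (d_tail V E G g d)" using finite_subset[OF sub b(1)] .
    moreover have "card (d_tail V E G g d) \<le> card (Dset u d)" using card_mono[OF b(1) sub] .
    ultimately show ?thesis using b(2) by linarith
  next
    case False
    then have "d_tail V E G g d = {}" unfolding d_tail_def by blast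
    then show ?thesis by simp
  qed
qed


end
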